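(* Let $O=(W,A,Z,R,RY)$ denote the observed data, with $W$ pre-exposure covariates, $A\in\{0,1\}$ a binary exposure, $Z$ a nonempty set of additional covariates, $R\in\{0,1\}$ a selection indicator, and $Y$ a real outcome observed only when $R=1$; let $(W;Z)$ be an $s$-admissible pair with $Z\neq\emptyset$ and $P$ the observed-data distribution. Let $\pi_A(W)=\Pr(A=1\mid W)$, $\pi_R(W,A,Z)=\Pr(R=1\mid W,A,Z)$, $Q_1(W,A,Z)=\mathbb{E}[Y\mid W,A,Z,R=1]$, $Q_2(W,A)=\mathbb{E}_{Z\mid W,A}Q_1(W,A,Z)$, and let $\psi=\Psi[P]=\mathbb{E}_W[Q_2(W,1)-Q_2(W,0)]$ be the ATE given by the $s$-formula. For putative models $(\tilde Q_1,\tilde Q_2,\tilde\pi_A,\tilde\pi_R)$ define $$\tilde D(O)=\frac{A-\tilde\pi_A(W)}{\tilde\pi_A(W)[1-\tilde\pi_A(W)]}\,\frac{R}{\tilde\pi_R(W,A,Z)}\big[Y-\tilde Q_1(W,A,Z)\big]+\frac{A-\tilde\pi_A(W)}{\tilde\pi_A(W)[1-\tilde\pi_A(W)]}\big[\tilde Q_1(W,A,Z)-\tilde Q_2(W,A)\big]+\tilde Q_2(W,1)-\tilde Q_2(W,0)-\psi,$$ i.e. the EIF of $\Psi$ at $P$ with $(Q_1,Q_2,\pi_A,\pi_R)$ replaced by the putative models while $\psi$ is kept as is. Then $\mathbb{E}_P\tilde D(O)=0$ is a valid (robust) estimating equation for $\psi=\Psi[P]$ (i.e. it holds at the true ATE $\psi$)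 provided at least one of the following holds: (1) the sequential regression models are correctly specified: $\tilde Q_1=Q_1$ and $\tilde Q_2=Q_2$; (2) the exposure and selection propensity score models are correctly specified: $\tilde\pi_A=\pi_A$ and $\tilde\pi_R=\pi_R$; (3) the exposure propensity score model and the mean-imputation model are correctly specified: $\tilde\pi_A=\pi_A$ and $\tilde Q_1=Q_1$.
   Context: An $s$-admissible pair $(W;Z)$ is a pair of covariate sets for which the ATE $\mathbb{E}[Y^{1}-Y^{0}]$ (with $Y^a$ the potential outcome under exposure $a$) is identified from the selected-sample data via the $s$-formula above: $W$ suffices to control confounding of $A$ on $Y$ and $(W,A,Z)$ renders the outcome independent of selection $R$ (so that $Y\perp R\mid W,A,Z$), together with positivity ($0<\pi_A<1$, $\pi_R>0$); the putative propensity models are likewise assumed to satisfy $0<\tilde\pi_A<1$, $\tilde\pi_R>0$. "Correctly specified" means the putative model equals the corresponding true nuisance function. The term $RY$ is well defined even when $Y$ is unobserved since it is multiplied by $R$. *)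

theory Defs
  imports "HOL-Probability.Probability"
begin

text \<open>W :: 'a => 'w (measurable into MW), A :: 'a => real with values in {0,1},
  Z :: 'a => 'z (measurable into MZ), R :: 'a => real with values in {0,1},
  Y :: 'a => real (only R * Y enters).\<close>

definition sigW :: "'a measure \<Rightarrow> ('a \<Rightarrow> 'w) \<Rightarrow> 'w measure \<Rightarrow> 'a measure" where
  "sigW M W MW = vimage_algebra (space M) W MW"

definition sigWA :: "'a measure \<Rightarrow> ('a \<Rightarrow> 'w) \<Rightarrow> 'w measure \<Rightarrow> ('a \<Rightarrow> real) \<Rightarrow> 'a measure" where
  "sigWA M W MW A = vimage_algebra (space M) (\<lambda>x. (W x, A x)) (MW \<Otimes>\<^sub>M borel)"

definition sigWAZ :: "'a measure \<Rightarrow> ('a \<Rightarrow> 'w) \<Rightarrow> 'w measure \<Rightarrow> ('a \<Rightarrow> real)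
    \<Rightarrow> ('a \<Rightarrow> 'z) \<Rightarrow> 'z measure \<Rightarrow> 'a measure" where
  "sigWAZ M W MW A Z MZ = vimage_algebra (space M) (\<lambda>x. (W x, A x, Z x)) (MW \<Otimes>\<^sub>M borel \<Otimes>\<^sub>M MZ)"

definition selected :: "'a measure \<Rightarrow> ('a \<Rightarrow> real) \<Rightarrow> 'a set" where
  "selected M R = {x \<in> space M. R x = 1}"

definition is_piA :: "'a measure \<Rightarrow> ('a \<Rightarrow> 'w) \<Rightarrow> 'w measure \<Rightarrow> ('a \<Rightarrow> real)
    \<Rightarrow> ('w \<Rightarrow> real) \<Rightarrow> bool" where
  "is_piA M W MW A piA \<longleftrightarrow> piA \<in> borel_measurable MW \<and>
     (AE x in M. piA (W x) = real_cond_exp M (sigW M W MW)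
                               (indicator {y \<in> space M. A y = 1}) x)"

definition is_piR :: "'a measure \<Rightarrow> ('a \<Rightarrow> 'w) \<Rightarrow> 'w measure \<Rightarrow> ('a \<Rightarrow> real)
    \<Rightarrow> ('a \<Rightarrow> 'z) \<Rightarrow> 'z measure \<Rightarrow> ('a \<Rightarrow> real) \<Rightarrow> ('w \<times> real \<times> 'z \<Rightarrow> real) \<Rightarrow> bool" where
  "is_piR M W MW A Z MZ R piR \<longleftrightarrow> piR \<in> borel_measurable (MW \<Otimes>\<^sub>M borel \<Otimes>\<^sub>M MZ) \<and>
     (AE x in M. piR (W x, A x, Z x) = real_cond_exp M (sigWAZ M W MW A Z MZ)
                               (indicator (selected M R)) x)"

text \<open>Q_1(W,A,Z) = E[Y | W, A, Z, R = 1]: conditional expectation of Y given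
  (W,A,Z) under P conditioned on the event {R = 1}.\<close>
definition is_Q1 :: "'a measure \<Rightarrow> ('a \<Rightarrow> 'w) \<Rightarrow> 'w measure \<Rightarrow> ('a \<Rightarrow> real)
    \<Rightarrow> ('a \<Rightarrow> 'z) \<Rightarrow> 'z measure \<Rightarrow> ('a \<Rightarrow> real) \<Rightarrow> ('a \<Rightarrow> real)
    \<Rightarrow> ('w \<times> real \<times> 'z \<Rightarrow> real) \<Rightarrow> bool" where
  "is_Q1 M W MW A Z MZ R Y Q1 \<longleftrightarrow> Q1 \<in> borel_measurable (MW \<Otimes>\<^sub>M borel \<Otimes>\<^sub>M MZ) \<and>
     (AE x in uniform_measure M (selected M R).
        Q1 (W x, A x, Z x) = real_cond_exp (uniform_measure M (selected M R))
                               (sigWAZ M W MW A Z MZ) Y x)"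

definition is_Q2 :: "'a measure \<Rightarrow> ('a \<Rightarrow> 'w) \<Rightarrow> 'w measure \<Rightarrow> ('a \<Rightarrow> real)
    \<Rightarrow> ('a \<Rightarrow> 'z) \<Rightarrow> ('w \<times> real \<times> 'z \<Rightarrow> real) \<Rightarrow> ('w \<times> real \<Rightarrow> real) \<Rightarrow> bool" where
  "is_Q2 M W MW A Z Q1 Q2 \<longleftrightarrow> Q2 \<in> borel_measurable (MW \<Otimes>\<^sub>M borel) \<and>
     (AE x in M. Q2 (W x, A x) = real_cond_exp M (sigWA M W MW A)
                               (\<lambda>y. Q1 (W y, A y, Z y)) x)"

definition Psi :: "'a measure \<Rightarrow> ('a \<Rightarrow> 'w) \<Rightarrow> ('w \<times> real \<Rightarrow> real) \<Rightarrow> real" where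
  "Psi M W Q2 = (\<integral>x. Q2 (W x, 1) - Q2 (W x, 0) \<partial>M)"

definition Hw :: "('w \<Rightarrow> real) \<Rightarrow> 'w \<Rightarrow> real \<Rightarrow> real" where
  "Hw piA w a = (a - piA w) / (piA w * (1 - piA w))"

definition Dtilde :: "('a \<Rightarrow> 'w) \<Rightarrow> ('a \<Rightarrow> real) \<Rightarrow> ('a \<Rightarrow> 'z) \<Rightarrow> ('a \<Rightarrow> real) \<Rightarrow> ('a \<Rightarrow> real)
    \<Rightarrow> ('w \<times> real \<times> 'z \<Rightarrow> real) \<Rightarrow> ('w \<times> real \<Rightarrow> real) \<Rightarrow> ('w \<Rightarrow> real)
    \<Rightarrow> ('w \<times> real \<times> 'z \<Rightarrow> real) \<Rightarrow> real \<Rightarrow> 'a \<Rightarrow> real" where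
  "Dtilde W A Z R Y tQ1 tQ2 tpiA tpiR psi x =
     Hw tpiA (W x) (A x) * (R x / tpiR (W x, A x, Z x)) * (Y x - tQ1 (W x, A x, Z x))
     + Hw tpiA (W x) (A x) * (tQ1 (W x, A x, Z x) - tQ2 (W x, A x))
     + tQ2 (W x, 1) - tQ2 (W x, 0) - psi"

end

theory Submission
  imports Defs
begin


lemma vsub:
  assumes P: "prob_space M" and T: "T \<in> measurable M N"
  shows "sigma_finite_subalgebra M (vimage_algebra (space M) T N)"
proof -
  interpret prob_space M by fact
  have "finite_measure_subalgebra M (vimage_algebra (space M) T N)"
    unfolding finite_measure_subalgebra_def finite_measure_subalgebra_axioms_def subalgebra_def
    using finite_measure_axioms sets_image_in_sets[OF refl T] by simp
  then show ?thesis using finite_measure_subalgebra_is_sigma_finite by blast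
qed

lemma ceG:
  assumes P: "prob_space M" and T: "T \<in> measurable M N" and h: "h \<in> borel_measurable N"
    and q: "q \<in> borel_measurable M" and g: "g \<in> borel_measurable M"
    and ae: "AE x in M. q x = real_cond_exp M (vimage_algebra (space M) T N) g x"
    and int: "integrable M (\<lambda>x. h (T x) * g x)"
  shows "(\<integral>x. h (T x) * q x \<partial>M) = (\<integral>x. h (T x) * g x \<partial>M)"
proof -
  interpret sigma_finite_subalgebra M "vimage_algebra (space M) T N" using vsub[OF P T] .
  have Tv: "T \<in> measurable (vimage_algebra (space M) T N) N"
    by (rule measurable_vimage_algebra1) (use measurable_space[OF T] in blast)
  have hm: "(\<lambda>x. h (T x)) \<in> borel_measurable (vimage_algebra (space M) T N)"
    using measurable_comp[OF Tv h] by (simp add: comp_def)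
  have hM: "(\<lambda>x. h (T x)) \<in> borel_measurable M"
    using measurable_comp[OF T h] by (simp add: comp_def)
  have m1: "(\<lambda>x. h (T x) * q x) \<in> borel_measurable M"
    by (rule borel_measurable_times[OF hM q])
  have m2: "(\<lambda>x. h (T x) * real_cond_exp M (vimage_algebra (space M) T N) g x) \<in> borel_measurable M"
    by (rule borel_measurable_times[OF hM borel_measurable_cond_exp2])
  have "(\<integral>x. h (T x) * q x \<partial>M) = (\<integral>x. h (T x) * real_cond_exp M (vimage_algebra (space M) T N) g x \<partial>M)"
    by (rule integral_cong_AE[OF m1 m2]) (use ae in auto)
  also have "\<dots> = (\<integral>x. h (T x) * g x \<partial>M)"
    by (rule real_cond_exp_intg(2)[OF int hm g])
  finally show ?thesis .
qed



lemma unif: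
  fixes f :: "'a \<Rightarrow> real"
  assumes P: "prob_space M" and S: "S \<in> sets M" and S0: "emeasure M S \<noteq> 0"
    and f: "f \<in> borel_measurable M"
  shows "integrable (uniform_measure M S) f \<longleftrightarrow> integrable M (\<lambda>x. indicator S x * f x)"
    and "integral\<^sup>L (uniform_measure M S) f = (\<integral>x. indicator S x * f x \<partial>M) / measure M S"
proof -
  interpret prob_space M by fact
  let ?c = "measure M S"
  have c: "?c > 0" using S0 emeasure_eq_measure zero_less_measure_iff by fastforce
  have eq: "uniform_measure M S = density M (\<lambda>x. ennreal (indicator S x / ?c))"
    unfolding uniform_measure_def
    apply (rule density_cong)
    using S apply measurable
    using c apply (auto simp: emeasure_eq_measure divide_ennreal split: split_indicator)
    by (metis divide_ennreal ennreal_1 zero_le_one)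
  have gm: "(\<lambda>x. indicator S x / ?c) \<in> borel_measurable M" using S by measurable
  have nn: "AE x in M. 0 \<le> indicator S x / ?c" using c by auto
  show "integrable (uniform_measure M S) f \<longleftrightarrow> integrable M (\<lambda>x. indicator S x * f x)"
  proof -
    have e: "(\<lambda>x. (indicator S x / ?c) *\<^sub>R f x) = (\<lambda>x. (1 / ?c) * (indicator S x * f x))" by auto
    show ?thesis unfolding eq integrable_density[OF f gm nn] e integrable_mult_left_iff
      using c by simp
  qed
  show "integral\<^sup>L (uniform_measure M S) f = (\<integral>x. indicator S x * f x \<partial>M) / measure M S"
    unfolding eq integral_density[OF f gm nn]
    by (simp flip: integral_divide_zero)
qed

lemma K1:
  assumes P: "prob_space M" and T: "T \<in> measurable M N" and S: "S \<in> sets M"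
    and S0: "emeasure M S \<noteq> 0" and g: "g \<in> borel_measurable N"
    and Y: "Y \<in> borel_measurable M" and q: "q \<in> borel_measurable M"
    and ae: "AE x in uniform_measure M S. q x = real_cond_exp (uniform_measure M S) (vimage_algebra (space M) T N) Y x"
    and int: "integrable M (\<lambda>x. indicator S x * (g (T x) * Y x))"
  shows "(\<integral>x. indicator S x * (g (T x) * q x) \<partial>M) = (\<integral>x. indicator S x * (g (T x) * Y x) \<partial>M)"
proof -
  interpret prob_space M by fact
  let ?U = "uniform_measure M S"
  have PU: "prob_space ?U" by (rule prob_space_uniform_measure[OF S0]) simp
  have TU: "T \<in> measurable ?U N" using T by (simp cong: measurable_cong_sets)
  have qU: "q \<in> borel_measurable ?U" using q by (simp cong: measurable_cong_sets)
  have YU: "Y \<in> borel_measurable ?U" using Y by (simp cong: measurable_cong_sets)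
  have gTY: "(\<lambda>x. g (T x) * Y x) \<in> borel_measurable M" using T g Y by measurable
  have gTq: "(\<lambda>x. g (T x) * q x) \<in> borel_measurable M" using T g q by measurable
  have intU: "integrable ?U (\<lambda>x. g (T x) * Y x)"
    using unif(1)[OF P S S0 gTY] int by simp
  have "(\<integral>x. g (T x) * q x \<partial>?U) = (\<integral>x. g (T x) * Y x \<partial>?U)"
    using ceG[OF PU TU g qU YU _ intU] ae by simp
  then have "(\<integral>x. indicator S x * (g (T x) * q x) \<partial>M) / measure M S
      = (\<integral>x. indicator S x * (g (T x) * Y x) \<partial>M) / measure M S"
    using unif(2)[OF P S S0 gTY] unif(2)[OF P S S0 gTq] by simp
  moreover have "measure M S > 0" using S0 emeasure_eq_measure zero_less_measure_iff by fastforce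
  ultimately show ?thesis by simp
qed


lemma arith1: "d = a - b + c - e + f - g - p \<Longrightarrow> b = a \<Longrightarrow> c = e \<Longrightarrow> p = f - g \<Longrightarrow> d = (0::real)"
  by simp

lemma arith2: "d = a - b + c - e + f - g - p \<Longrightarrow> a' = a \<Longrightarrow> a' = k \<Longrightarrow> k = m \<Longrightarrow> m = q1 - q0
    \<Longrightarrow> p = q1 - q0 \<Longrightarrow> b = c \<Longrightarrow> e = f - g \<Longrightarrow> d = (0::real)"
  by simp

lemma arith3: "d = a - b + c - e + f - g - p \<Longrightarrow> b = a \<Longrightarrow> c = m \<Longrightarrow> m = q1 - q0
    \<Longrightarrow> p = q1 - q0 \<Longrightarrow> e = f - g \<Longrightarrow> d = (0::real)"
  by simp

theorem mainTheorem2: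
  fixes M :: "'a measure"
    and W :: "'a \<Rightarrow> 'w" and MW :: "'w measure"
    and Z :: "'a \<Rightarrow> 'z" and MZ :: "'z measure"
    and A R Y :: "'a \<Rightarrow> real"
    and piA tpiA :: "'w \<Rightarrow> real"
    and piR tpiR Q1 tQ1 :: "'w \<times> real \<times> 'z \<Rightarrow> real"
    and Q2 tQ2 :: "'w \<times> real \<Rightarrow> real"
  assumes P: "prob_space M"
    and W_meas: "W \<in> measurable M MW"
    and Z_meas: "Z \<in> measurable M MZ"
    and A_meas: "A \<in> borel_measurable M" and A_bin: "\<forall>x\<in>space M. A x \<in> {0, 1}"
    and R_meas: "R \<in> borel_measurable M" and R_bin: "\<forall>x\<in>space M. R x \<in> {0, 1}"
    and Y_meas: "Y \<in> borel_measurable M"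
    (* true nuisance functions *)
    and piA_def: "is_piA M W MW A piA"
    and piR_def: "is_piR M W MW A Z MZ R piR"
    and Q1_def: "is_Q1 M W MW A Z MZ R Y Q1"
    and Q2_def: "is_Q2 M W MW A Z Q1 Q2"
    (* positivity *)
    and pos_A: "\<forall>w\<in>space MW. 0 < piA w \<and> piA w < 1"
    and pos_R: "\<forall>t\<in>space (MW \<Otimes>\<^sub>M borel \<Otimes>\<^sub>M MZ). 0 < piR t"
    (* putative models *)
    and tpiA_meas: "tpiA \<in> borel_measurable MW"
    and tpiR_meas: "tpiR \<in> borel_measurable (MW \<Otimes>\<^sub>M borel \<Otimes>\<^sub>M MZ)"
    and tQ1_meas: "tQ1 \<in> borel_measurable (MW \<Otimes>\<^sub>M borel \<Otimes>\<^sub>M MZ)"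
    and tQ2_meas: "tQ2 \<in> borel_measurable (MW \<Otimes>\<^sub>M borel)"
    and tpos_A: "\<forall>w. 0 < tpiA w \<and> tpiA w < 1"
    and tpos_R: "\<forall>t. 0 < tpiR t"
    (* integrability (finite means of the terms involved) *)
    and int_RY: "integrable M (\<lambda>x. R x * Y x)"
    and int_Q1: "integrable M (\<lambda>x. Q1 (W x, A x, Z x))"
    and int_Q2: "\<And>a. a \<in> {0, 1} \<Longrightarrow> integrable M (\<lambda>x. Q2 (W x, a))"
    and int_tQ2: "\<And>a. a \<in> {0, 1} \<Longrightarrow> integrable M (\<lambda>x. tQ2 (W x, a))"
    and int_GY: "integrable M (\<lambda>x. Hw tpiA (W x) (A x) * (R x / tpiR (W x, A x, Z x)) * Y x)"
    and int_GtQ1: "integrable M (\<lambda>x. Hw tpiA (W x) (A x) * (R x / tpiR (W x, A x, Z x)) * tQ1 (W x, A x, Z x))"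
    and int_GQ1: "integrable M (\<lambda>x. Hw tpiA (W x) (A x) * (R x / tpiR (W x, A x, Z x)) * Q1 (W x, A x, Z x))"
    and int_HtQ1: "integrable M (\<lambda>x. Hw tpiA (W x) (A x) * tQ1 (W x, A x, Z x))"
    and int_HQ1: "integrable M (\<lambda>x. Hw tpiA (W x) (A x) * Q1 (W x, A x, Z x))"
    and int_HtQ2: "integrable M (\<lambda>x. Hw tpiA (W x) (A x) * tQ2 (W x, A x))"
    and int_HQ2: "integrable M (\<lambda>x. Hw tpiA (W x) (A x) * Q2 (W x, A x))"
    (* at least one of the three correct-specification conditions *)
    and spec: "(tQ1 = Q1 \<and> tQ2 = Q2) \<or> (tpiA = piA \<and> tpiR = piR) \<or> (tpiA = piA \<and> tQ1 = Q1)"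
  shows "(\<integral>x. Dtilde W A Z R Y tQ1 tQ2 tpiA tpiR (Psi M W Q2) x \<partial>M) = 0"
proof -
  interpret prob_space M by fact
  note [measurable] = W_meas Z_meas A_meas R_meas Y_meas tpiA_meas tpiR_meas tQ1_meas tQ2_meas
  have piA_m[measurable]: "piA \<in> borel_measurable MW" using piA_def unfolding is_piA_def by blast
  have piR_m[measurable]: "piR \<in> borel_measurable (MW \<Otimes>\<^sub>M borel \<Otimes>\<^sub>M MZ)" using piR_def unfolding is_piR_def by blast
  have Q1_m[measurable]: "Q1 \<in> borel_measurable (MW \<Otimes>\<^sub>M borel \<Otimes>\<^sub>M MZ)" using Q1_def unfolding is_Q1_def by blast
  have Q2_m[measurable]: "Q2 \<in> borel_measurable (MW \<Otimes>\<^sub>M borel)" using Q2_def unfolding is_Q2_def by blast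
  have Tm[measurable]: "(\<lambda>x. (W x, A x, Z x)) \<in> measurable M (MW \<Otimes>\<^sub>M borel \<Otimes>\<^sub>M MZ)"
    by (intro measurable_Pair W_meas A_meas Z_meas)
  have T2m[measurable]: "(\<lambda>x. (W x, A x)) \<in> measurable M (MW \<Otimes>\<^sub>M borel)"
    by (intro measurable_Pair W_meas A_meas)
  have Tsp: "\<And>x. x \<in> space M \<Longrightarrow> (W x, A x, Z x) \<in> space (MW \<Otimes>\<^sub>M borel \<Otimes>\<^sub>M MZ)"
    using measurable_space[OF Tm] by blast
  have Wsp: "\<And>x. x \<in> space M \<Longrightarrow> W x \<in> space MW"
    using measurable_space[OF W_meas] by blast
  let ?S = "selected M R"
  have S[measurable]: "?S \<in> sets M" unfolding selected_def by measurable
  have Rind: "\<And>x. x \<in> space M \<Longrightarrow> R x = indicator ?S x"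
    using R_bin by (auto simp: selected_def split: split_indicator)
  have Hm[measurable]: "(\<lambda>x. Hw tpiA (W x) (A x)) \<in> borel_measurable M" unfolding Hw_def by measurable
  have Spos: "emeasure M ?S \<noteq> 0"
  proof
    assume e0: "emeasure M ?S = 0"
    interpret sub: sigma_finite_subalgebra M "sigWAZ M W MW A Z MZ"
      unfolding sigWAZ_def by (rule vsub[OF P Tm])
    have "AE x in M. x \<notin> ?S" using e0 S by (intro AE_not_in) auto
    then have "AE x in M. indicator ?S x = (\<lambda>_. 0::real) x" by eventually_elim auto
    then have "AE x in M. real_cond_exp M (sigWAZ M W MW A Z MZ) (indicator ?S) x
        = real_cond_exp M (sigWAZ M W MW A Z MZ) (\<lambda>_. 0::real) x"
      by (intro sub.real_cond_exp_cong) auto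
    moreover have "AE x in M. real_cond_exp M (sigWAZ M W MW A Z MZ) (\<lambda>_. 0::real) x = 0"
      by (rule sub.real_cond_exp_F_meas) auto
    moreover have "AE x in M. piR (W x, A x, Z x) = real_cond_exp M (sigWAZ M W MW A Z MZ) (indicator ?S) x"
      using piR_def unfolding is_piR_def by blast
    moreover have "AE x in M. 0 < piR (W x, A x, Z x)"
      using pos_R Tsp by (intro AE_I2) auto
    ultimately have "AE x in M. False" by eventually_elim auto
    then show False by (simp add: AE_False)
  qed
  have F1: "(\<integral>x. Hw tpiA (W x) (A x) * (R x / tpiR (W x, A x, Z x)) * Q1 (W x, A x, Z x) \<partial>M)
      = (\<integral>x. Hw tpiA (W x) (A x) * (R x / tpiR (W x, A x, Z x)) * Y x \<partial>M)"
  proof -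
    let ?g = "\<lambda>t. Hw tpiA (fst t) (fst (snd t)) / tpiR t"
    have gm: "?g \<in> borel_measurable (MW \<Otimes>\<^sub>M borel \<Otimes>\<^sub>M MZ)" unfolding Hw_def by measurable
    have eqY: "indicator ?S x * (?g (W x, A x, Z x) * Y x)
        = Hw tpiA (W x) (A x) * (R x / tpiR (W x, A x, Z x)) * Y x" if x: "x \<in> space M" for x
      using Rind[OF x] by simp
    have eqQ: "indicator ?S x * (?g (W x, A x, Z x) * Q1 (W x, A x, Z x))
        = Hw tpiA (W x) (A x) * (R x / tpiR (W x, A x, Z x)) * Q1 (W x, A x, Z x)" if x: "x \<in> space M" for x
      using Rind[OF x] by simp
    have int: "integrable M (\<lambda>x. indicator ?S x * (?g (W x, A x, Z x) * Y x))"
      by (rule Bochner_Integration.integrable_cong[THEN iffD1, OF refl _ int_GY]) (simp only: eqY)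
    have ae: "AE x in uniform_measure M ?S. Q1 (W x, A x, Z x) = real_cond_exp (uniform_measure M ?S)
        (vimage_algebra (space M) (\<lambda>x. (W x, A x, Z x)) (MW \<Otimes>\<^sub>M borel \<Otimes>\<^sub>M MZ)) Y x"
      using Q1_def unfolding is_Q1_def sigWAZ_def by blast
    have "(\<integral>x. indicator ?S x * (?g (W x, A x, Z x) * Q1 (W x, A x, Z x)) \<partial>M)
        = (\<integral>x. indicator ?S x * (?g (W x, A x, Z x) * Y x) \<partial>M)"
      by (rule K1[OF P Tm S Spos gm Y_meas _ ae int]) measurable
    then show ?thesis using Bochner_Integration.integral_cong[OF refl eqY, of M] Bochner_Integration.integral_cong[OF refl eqQ, of M] by simp
  qed
  have F2: "\<And>h. h \<in> borel_measurable (MW \<Otimes>\<^sub>M borel) \<Longrightarrow>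
      integrable M (\<lambda>x. h (W x, A x) * Q1 (W x, A x, Z x)) \<Longrightarrow>
      (\<integral>x. h (W x, A x) * Q1 (W x, A x, Z x) \<partial>M) = (\<integral>x. h (W x, A x) * Q2 (W x, A x) \<partial>M)"
  proof -
    fix h :: "'w \<times> real \<Rightarrow> real"
    assume hm: "h \<in> borel_measurable (MW \<Otimes>\<^sub>M borel)"
      and int: "integrable M (\<lambda>x. h (W x, A x) * Q1 (W x, A x, Z x))"
    have ae: "AE x in M. Q2 (W x, A x) = real_cond_exp M (vimage_algebra (space M) (\<lambda>x. (W x, A x)) (MW \<Otimes>\<^sub>M borel))
        (\<lambda>y. Q1 (W y, A y, Z y)) x"
      using Q2_def unfolding is_Q2_def sigWA_def by blast
    show "(\<integral>x. h (W x, A x) * Q1 (W x, A x, Z x) \<partial>M) = (\<integral>x. h (W x, A x) * Q2 (W x, A x) \<partial>M)"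
    proof -
      have "(\<integral>x. h (W x, A x) * Q2 (W x, A x) \<partial>M) = (\<integral>x. h (W x, A x) * Q1 (W x, A x, Z x) \<partial>M)"
        by (rule ceG[OF P T2m hm _ _ ae int]) measurable
      then show ?thesis by simp
    qed
  qed
  have F2': "(\<integral>x. Hw tpiA (W x) (A x) * Q1 (W x, A x, Z x) \<partial>M) = (\<integral>x. Hw tpiA (W x) (A x) * Q2 (W x, A x) \<partial>M)"
    using F2[of "\<lambda>p. Hw tpiA (fst p) (snd p)"] int_HQ1 unfolding Hw_def by (simp add: measurable_split_conv)

  have F3: "(\<integral>x. Hw tpiA (W x) (A x) * (R x / piR (W x, A x, Z x)) * f (W x, A x, Z x) \<partial>M)
      = (\<integral>x. Hw tpiA (W x) (A x) * f (W x, A x, Z x) \<partial>M)"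
    if fm: "f \<in> borel_measurable (MW \<Otimes>\<^sub>M borel \<Otimes>\<^sub>M MZ)"
      and int: "integrable M (\<lambda>x. Hw tpiA (W x) (A x) * (R x / piR (W x, A x, Z x)) * f (W x, A x, Z x))"
    for f
  proof -
    let ?h = "\<lambda>t. Hw tpiA (fst t) (fst (snd t)) / piR t * f t"
    have hm: "?h \<in> borel_measurable (MW \<Otimes>\<^sub>M borel \<Otimes>\<^sub>M MZ)" using fm unfolding Hw_def by measurable
    have ae: "AE x in M. piR (W x, A x, Z x) = real_cond_exp M
        (vimage_algebra (space M) (\<lambda>x. (W x, A x, Z x)) (MW \<Otimes>\<^sub>M borel \<Otimes>\<^sub>M MZ)) (indicator ?S) x"
      using piR_def unfolding is_piR_def sigWAZ_def by blast
    have eq1: "?h (W x, A x, Z x) * indicator ?S x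
        = Hw tpiA (W x) (A x) * (R x / piR (W x, A x, Z x)) * f (W x, A x, Z x)" if x: "x \<in> space M" for x
      using Rind[OF x] by simp
    have eq2: "?h (W x, A x, Z x) * piR (W x, A x, Z x) = Hw tpiA (W x) (A x) * f (W x, A x, Z x)"
      if x: "x \<in> space M" for x
    proof -
      have "piR (W x, A x, Z x) \<noteq> 0" using pos_R Tsp[OF x] by fastforce
      then show ?thesis by simp
    qed
    have int1: "integrable M (\<lambda>x. ?h (W x, A x, Z x) * indicator ?S x)"
      by (rule Bochner_Integration.integrable_cong[THEN iffD1, OF refl _ int]) (simp only: eq1)
    have "(\<integral>x. ?h (W x, A x, Z x) * piR (W x, A x, Z x) \<partial>M) = (\<integral>x. ?h (W x, A x, Z x) * indicator ?S x \<partial>M)"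
      by (rule ceG[OF P Tm hm _ _ ae int1]) measurable
    then show ?thesis
      using Bochner_Integration.integral_cong[OF refl eq1, of M] Bochner_Integration.integral_cong[OF refl eq2, of M] by simp
  qed
  have F4: "(\<integral>x. Hw piA (W x) (A x) * f (W x, A x) \<partial>M) = (\<integral>x. f (W x, 1) \<partial>M) - (\<integral>x. f (W x, 0) \<partial>M)"
    if fm[measurable]: "f \<in> borel_measurable (MW \<Otimes>\<^sub>M borel)"
      and int: "integrable M (\<lambda>x. Hw piA (W x) (A x) * f (W x, A x))"
      and int1: "integrable M (\<lambda>x. f (W x, 1))" and int0: "integrable M (\<lambda>x. f (W x, 0))"
    for f
  proof -
    let ?E1 = "{y \<in> space M. A y = 1}"
    let ?E0 = "{y \<in> space M. A y = 0}"
    have E1[measurable]: "?E1 \<in> sets M" by measurable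
    have E0[measurable]: "?E0 \<in> sets M" by measurable
    have pp: "0 < piA (W x)" "piA (W x) < 1" if x: "x \<in> space M" for x
      using pos_A Wsp[OF x] by auto
    interpret subW: sigma_finite_subalgebra M "sigW M W MW"
      unfolding sigW_def by (rule vsub[OF P W_meas])
    have ae1: "AE x in M. piA (W x) = real_cond_exp M (sigW M W MW) (indicator ?E1) x"
      using piA_def unfolding is_piA_def by blast
    have c1: "AE x in M. real_cond_exp M (sigW M W MW) (indicator ?E0) x
        = real_cond_exp M (sigW M W MW) (\<lambda>x. 1 - indicator ?E1 x) x"
      by (rule subW.real_cond_exp_cong) (use A_bin in \<open>auto intro!: AE_I2 split: split_indicator\<close>)
    have iE1: "integrable M (indicator ?E1 :: 'a \<Rightarrow> real)"
      by (rule integrable_real_indicator) (auto simp: less_top[symmetric])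
    have c2: "AE x in M. real_cond_exp M (sigW M W MW) (\<lambda>x. 1 - indicator ?E1 x) x
        = real_cond_exp M (sigW M W MW) (\<lambda>x. 1) x - real_cond_exp M (sigW M W MW) (indicator ?E1) x"
      using subW.real_cond_exp_diff[of "\<lambda>x. 1" "indicator ?E1"] iE1 by simp
    have c3: "AE x in M. real_cond_exp M (sigW M W MW) (\<lambda>x. 1) x = 1"
      by (rule subW.real_cond_exp_F_meas) auto
    have ae0: "AE x in M. 1 - piA (W x) = real_cond_exp M (sigW M W MW) (indicator ?E0) x"
      using ae1 c1 c2 c3 by eventually_elim auto
    let ?h1 = "\<lambda>w. f (w, 1) / piA w"
    let ?h0 = "\<lambda>w. - f (w, 0) / (1 - piA w)"
    have h1m: "?h1 \<in> borel_measurable MW" by measurable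
    have h0m: "?h0 \<in> borel_measurable MW" by measurable
    have e1: "Hw piA (W x) (A x) * f (W x, A x) * indicator ?E1 x = ?h1 (W x) * indicator ?E1 x"
      if x: "x \<in> space M" for x
      using pp[OF x] x by (auto simp: Hw_def field_simps split: split_indicator)
    have e0: "Hw piA (W x) (A x) * f (W x, A x) * indicator ?E0 x = ?h0 (W x) * indicator ?E0 x"
      if x: "x \<in> space M" for x
      using pp[OF x] x by (auto simp: Hw_def field_simps split: split_indicator)
    have ei1: "integrable M (\<lambda>x. Hw piA (W x) (A x) * f (W x, A x) * indicator ?E1 x)"
      by (rule integrable_real_mult_indicator[OF E1 int])
    have ei0: "integrable M (\<lambda>x. Hw piA (W x) (A x) * f (W x, A x) * indicator ?E0 x)"
      by (rule integrable_real_mult_indicator[OF E0 int])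
    have ii1: "integrable M (\<lambda>x. ?h1 (W x) * indicator ?E1 x)"
      by (rule Bochner_Integration.integrable_cong[THEN iffD1, OF refl _ ei1]) (simp only: e1)
    have ii0: "integrable M (\<lambda>x. ?h0 (W x) * indicator ?E0 x)"
      by (rule Bochner_Integration.integrable_cong[THEN iffD1, OF refl _ ei0]) (simp only: e0)
    have a1: "(\<integral>x. ?h1 (W x) * piA (W x) \<partial>M) = (\<integral>x. ?h1 (W x) * indicator ?E1 x \<partial>M)"
      by (rule ceG[OF P W_meas h1m _ _ ae1[unfolded sigW_def] ii1]) measurable
    have a0: "(\<integral>x. ?h0 (W x) * (1 - piA (W x)) \<partial>M) = (\<integral>x. ?h0 (W x) * indicator ?E0 x \<partial>M)"
      by (rule ceG[OF P W_meas h0m _ _ ae0[unfolded sigW_def] ii0]) measurable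
    have a1': "(\<integral>x. ?h1 (W x) * piA (W x) \<partial>M) = (\<integral>x. f (W x, 1) \<partial>M)"
    proof (rule Bochner_Integration.integral_cong[OF refl])
      fix x assume x: "x \<in> space M"
      have "piA (W x) \<noteq> 0" using pp(1)[OF x] by simp
      then show "?h1 (W x) * piA (W x) = f (W x, 1)" by simp
    qed
    have a0': "(\<integral>x. ?h0 (W x) * (1 - piA (W x)) \<partial>M) = - (\<integral>x. f (W x, 0) \<partial>M)"
    proof -
      have "(\<integral>x. ?h0 (W x) * (1 - piA (W x)) \<partial>M) = (\<integral>x. - f (W x, 0) \<partial>M)"
      proof (rule Bochner_Integration.integral_cong[OF refl])
        fix x assume x: "x \<in> space M"
        have "1 - piA (W x) \<noteq> 0" using pp(2)[OF x] by simp
        then show "?h0 (W x) * (1 - piA (W x)) = - f (W x, 0)" by simp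
      qed
      then show ?thesis by simp
    qed
    have split: "Hw piA (W x) (A x) * f (W x, A x) = Hw piA (W x) (A x) * f (W x, A x) * indicator ?E1 x
        + Hw piA (W x) (A x) * f (W x, A x) * indicator ?E0 x" if x: "x \<in> space M" for x
      using A_bin x by (auto split: split_indicator)
    have "(\<integral>x. Hw piA (W x) (A x) * f (W x, A x) \<partial>M) = (\<integral>x. Hw piA (W x) (A x) * f (W x, A x) * indicator ?E1 x
        + Hw piA (W x) (A x) * f (W x, A x) * indicator ?E0 x \<partial>M)"
      by (rule Bochner_Integration.integral_cong[OF refl], rule split)
    also have "\<dots> = (\<integral>x. Hw piA (W x) (A x) * f (W x, A x) * indicator ?E1 x \<partial>M)
        + (\<integral>x. Hw piA (W x) (A x) * f (W x, A x) * indicator ?E0 x \<partial>M)"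
      by (rule Bochner_Integration.integral_add[OF ei1 ei0])
    also have "(\<integral>x. Hw piA (W x) (A x) * f (W x, A x) * indicator ?E1 x \<partial>M) = (\<integral>x. ?h1 (W x) * indicator ?E1 x \<partial>M)"
      by (rule Bochner_Integration.integral_cong[OF refl], rule e1)
    also have "(\<integral>x. Hw piA (W x) (A x) * f (W x, A x) * indicator ?E0 x \<partial>M) = (\<integral>x. ?h0 (W x) * indicator ?E0 x \<partial>M)"
      by (rule Bochner_Integration.integral_cong[OF refl], rule e0)
    finally show ?thesis using a1 a0 a1' a0' by simp
  qed
  have i1: "integrable M (\<lambda>x. Q2 (W x, 1))" by (rule int_Q2) simp
  have i0: "integrable M (\<lambda>x. Q2 (W x, 0))" by (rule int_Q2) simp
  have t1: "integrable M (\<lambda>x. tQ2 (W x, 1))" by (rule int_tQ2) simp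
  have t0: "integrable M (\<lambda>x. tQ2 (W x, 0))" by (rule int_tQ2) simp
  let ?psi = "Psi M W Q2"
  have psi: "?psi = (\<integral>x. Q2 (W x, 1) \<partial>M) - (\<integral>x. Q2 (W x, 0) \<partial>M)"
    unfolding Psi_def by (rule Bochner_Integration.integral_diff[OF i1 i0])
  have D: "(\<integral>x. Dtilde W A Z R Y tQ1 tQ2 tpiA tpiR ?psi x \<partial>M)
      = (\<integral>x. Hw tpiA (W x) (A x) * (R x / tpiR (W x, A x, Z x)) * Y x \<partial>M)
      - (\<integral>x. Hw tpiA (W x) (A x) * (R x / tpiR (W x, A x, Z x)) * tQ1 (W x, A x, Z x) \<partial>M)
      + (\<integral>x. Hw tpiA (W x) (A x) * tQ1 (W x, A x, Z x) \<partial>M)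
      - (\<integral>x. Hw tpiA (W x) (A x) * tQ2 (W x, A x) \<partial>M)
      + (\<integral>x. tQ2 (W x, 1) \<partial>M) - (\<integral>x. tQ2 (W x, 0) \<partial>M) - ?psi"
  proof -
    have "(\<integral>x. Dtilde W A Z R Y tQ1 tQ2 tpiA tpiR ?psi x \<partial>M)
      = (\<integral>x. Hw tpiA (W x) (A x) * (R x / tpiR (W x, A x, Z x)) * Y x
      - Hw tpiA (W x) (A x) * (R x / tpiR (W x, A x, Z x)) * tQ1 (W x, A x, Z x)
      + Hw tpiA (W x) (A x) * tQ1 (W x, A x, Z x)
      - Hw tpiA (W x) (A x) * tQ2 (W x, A x)
      + tQ2 (W x, 1) - tQ2 (W x, 0) - ?psi \<partial>M)"
      unfolding Dtilde_def right_diff_distrib by (rule Bochner_Integration.integral_cong[OF refl]) linarith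
    also have "\<dots> = (\<integral>x. Hw tpiA (W x) (A x) * (R x / tpiR (W x, A x, Z x)) * Y x \<partial>M)
      - (\<integral>x. Hw tpiA (W x) (A x) * (R x / tpiR (W x, A x, Z x)) * tQ1 (W x, A x, Z x) \<partial>M)
      + (\<integral>x. Hw tpiA (W x) (A x) * tQ1 (W x, A x, Z x) \<partial>M)
      - (\<integral>x. Hw tpiA (W x) (A x) * tQ2 (W x, A x) \<partial>M)
      + (\<integral>x. tQ2 (W x, 1) \<partial>M) - (\<integral>x. tQ2 (W x, 0) \<partial>M) - ?psi"
      using int_GY int_GtQ1 int_HtQ1 int_HtQ2 t1 t0 prob_space.prob_space[OF P] by simp
    finally show ?thesis .
  qed
  from spec consider (c1) "tQ1 = Q1" "tQ2 = Q2" | (c2) "tpiA = piA" "tpiR = piR" | (c3) "tpiA = piA" "tQ1 = Q1"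
    by blast
  then show ?thesis
  proof cases
    case c1
    show ?thesis unfolding c1 by (rule arith1[OF D[unfolded c1] F1 F2' psi])
  next
    case c2
    note g3 = F4[OF Q2_m int_HQ2[unfolded c2(1)] i1 i0]
    note g4 = F4[OF tQ2_meas int_HtQ2[unfolded c2(1)] t1 t0]
    note g1 = F3[OF Q1_m int_GQ1[unfolded c2(2)]]
    note g2 = F3[OF tQ1_meas int_GtQ1[unfolded c2(2)]]
    show ?thesis unfolding c2
      by (rule arith2[OF D[unfolded c2] F1[unfolded c2] g1[unfolded c2] F2'[unfolded c2] g3 psi g2[unfolded c2] g4])
  next
    case c3
    note g3 = F4[OF Q2_m int_HQ2[unfolded c3(1)] i1 i0]
    note g4 = F4[OF tQ2_meas int_HtQ2[unfolded c3(1)] t1 t0]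
    show ?thesis unfolding c3
      by (rule arith3[OF D[unfolded c3] F1[unfolded c3] F2'[unfolded c3] g3 psi g4])
  qed
qed

end
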